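(* Let $\phi:[0,\infty)\to[0,\infty)$ be a smooth, non-negative, non-increasing kernel, $\sigma>0$, $p>0$, $\kappa>0$, and $\Omega=\mathbb{R}^n\times\mathbb{R}^n\times(0,\infty)$. Let $f$ be a solution of \[ \partial_t f + v\cdot \nabla_x f + \nabla_v \cdot (f F(f)) + \nabla_v\cdot(f R) + \partial_\theta(f\Theta(f)) = 0,\qquad f(0)=f_0, \] with \[ F(f)(x,v)=\int_\Omega\phi(x-y)(w-v)f(y,w,\eta,t)\,\mathrm{d}y\,\mathrm{d}w\,\mathrm{d}\eta,\quad R(v,\theta)=\sigma v(\theta-|v|^p),\quad \Theta(f)(x,\theta)=\kappa\int_\Omega\phi(x-y)(\eta-\theta)f(y,w,\eta,t)\,\mathrm{d}y\,\mathrm{d}w\,\mathrm{d}\eta, \] where $f_0\ge0$ is compactly supported in $\Omega$. Let $\ell$ be a linear functional on $\mathbb{R}^n$ such that $\ell(v_0)\ge0$ for every $(x_0,v_0,\theta_0)\in\operatorname{supp} f_0$. Then $\ell(v)\ge 0$ for every $t>0$ and every $(x,v,\theta)\in\operatorname{supp} f_t$. *)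

theory Defs
  imports "HOL-Analysis.Analysis"
begin

definition Omega :: "((real^'n) \<times> (real^'n) \<times> real) set" where
  "Omega = UNIV \<times> UNIV \<times> {0<..}"

definition supp_Omega :: "((real^'n) \<times> (real^'n) \<times> real \<Rightarrow> real) \<Rightarrow> ((real^'n) \<times> (real^'n) \<times> real) set" where
  "supp_Omega g = Omega \<inter> closure {z \<in> Omega. g z \<noteq> 0}"

definition smooth_on_nonneg :: "(real \<Rightarrow> real) \<Rightarrow> bool" where
  "smooth_on_nonneg \<phi> \<longleftrightarrow> (\<exists>d :: nat \<Rightarrow> real \<Rightarrow> real. d 0 = \<phi> \<and>
      (\<forall>k. \<forall>r\<ge>0. (d k has_real_derivative d (Suc k) r) (at r within {0..})))"

definition alignF :: "(real \<Rightarrow> real) \<Rightarrow> (real \<Rightarrow> real^'n \<Rightarrow> real^'n \<Rightarrow> real \<Rightarrow> real)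
    \<Rightarrow> real \<Rightarrow> real^'n \<Rightarrow> real^'n \<Rightarrow> real^'n" where
  "alignF \<phi> f t x v = integral Omega (\<lambda>(y, w, \<eta>). (\<phi> (norm (x - y)) * f t y w \<eta>) *\<^sub>R (w - v))"

definition relaxR :: "real \<Rightarrow> real \<Rightarrow> real^'n \<Rightarrow> real \<Rightarrow> real^'n" where
  "relaxR \<sigma> p v \<theta> = (\<sigma> * (\<theta> - norm v powr p)) *\<^sub>R v"

definition alignTheta :: "real \<Rightarrow> (real \<Rightarrow> real) \<Rightarrow> (real \<Rightarrow> real^'n \<Rightarrow> real^'n \<Rightarrow> real \<Rightarrow> real)
    \<Rightarrow> real \<Rightarrow> real^'n \<Rightarrow> real \<Rightarrow> real" where
  "alignTheta \<kappa> \<phi> f t x \<theta> = \<kappa> * integral Omega (\<lambda>(y, w, \<eta>). \<phi> (norm (x - y)) * (\<eta> - \<theta>) * f t y w \<eta>)"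

definition C1_on :: "'a::real_normed_vector set \<Rightarrow> ('a \<Rightarrow> real) \<Rightarrow> bool" where
  "C1_on S g \<longleftrightarrow> (\<exists>g'. (\<forall>z\<in>S. (g has_derivative blinfun_apply (g' z)) (at z)) \<and> continuous_on S g')"

definition kinetic_solution ::
  "(real \<Rightarrow> real) \<Rightarrow> real \<Rightarrow> real \<Rightarrow> real \<Rightarrow> (real^'n \<Rightarrow> real^'n \<Rightarrow> real \<Rightarrow> real)
    \<Rightarrow> (real \<Rightarrow> real^'n \<Rightarrow> real^'n \<Rightarrow> real \<Rightarrow> real) \<Rightarrow> bool" where
  "kinetic_solution \<phi> \<sigma> p \<kappa> f0 f \<longleftrightarrow>
     continuous_on ({0..} \<times> Omega) (\<lambda>(t, x, v, \<theta>). f t x v \<theta>) \<and>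
     C1_on ({0<..} \<times> Omega) (\<lambda>(t, x, v, \<theta>). f t x v \<theta>) \<and>
     (\<forall>T\<ge>0. \<exists>K. compact K \<and> K \<subseteq> Omega \<and>
        (\<forall>t\<in>{0..T}. supp_Omega (\<lambda>(x, v, \<theta>). f t x v \<theta>) \<subseteq> K)) \<and>
     (\<forall>x v \<theta>. (x, v, \<theta>) \<in> Omega \<longrightarrow> f 0 x v \<theta> = f0 x v \<theta>) \<and>
     (\<forall>t>0. \<forall>x v \<theta>. (x, v, \<theta>) \<in> Omega \<longrightarrow>
        deriv (\<lambda>s. f s x v \<theta>) t
        + (\<Sum>i\<in>UNIV. v $ i * deriv (\<lambda>h. f t (x + h *\<^sub>R axis i 1) v \<theta>) 0)
        + (\<Sum>i\<in>UNIV. deriv (\<lambda>h. (f t x (v + h *\<^sub>R axis i 1) \<theta>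
              *\<^sub>R alignF \<phi> f t x (v + h *\<^sub>R axis i 1)) $ i) 0)
        + (\<Sum>i\<in>UNIV. deriv (\<lambda>h. (f t x (v + h *\<^sub>R axis i 1) \<theta>
              *\<^sub>R relaxR \<sigma> p (v + h *\<^sub>R axis i 1) \<theta>) $ i) 0)
        + deriv (\<lambda>\<eta>. f t x v \<eta> * alignTheta \<kappa> \<phi> f t x \<eta>) \<theta>
        = 0)"

end

theory Submission
  imports Defs
begin

lemma int_on_compact_supp:
  fixes h :: "'a::euclidean_space \<Rightarrow> 'b::euclidean_space"
  assumes "continuous_on S h" "compact K" "K \<subseteq> S" "\<And>z. z \<in> S \<Longrightarrow> z \<notin> K \<Longrightarrow> h z = 0"
  shows "h integrable_on S"
proof -
  have "set_integrable lborel K h"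
    unfolding set_integrable_def
    using borel_integrable_compact[OF assms(2) continuous_on_subset[OF assms(1,3)]] .
  then have hK: "h integrable_on K" by (rule set_borel_integral_eq_integral(1))
  let ?h = "\<lambda>z. if z \<in> K then h z else 0"
  have "?h integrable_on K" by (rule integrable_eq[OF hK]) auto
  then have "?h integrable_on S"
    by (rule integrable_on_superset) (use assms in auto)
  then show ?thesis by (rule integrable_eq) (use assms in auto)
qed

lemma ind_integrable:
  fixes K :: "'a::euclidean_space set"
  assumes "compact K" "K \<subseteq> S"
  shows "(\<lambda>z. if z \<in> K then (c::real) else 0) integrable_on S"
proof -
  have "(\<lambda>z. c) integrable_on K" by (rule integrable_on_const) (simp add: lmeasurable_compact assms)
  then have "(\<lambda>z. if z \<in> K then (c::real) else 0) integrable_on K" by (rule integrable_eq) auto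
  then show ?thesis by (rule integrable_on_superset) (use assms in auto)
qed

lemma line_deriv:
  assumes "(G has_derivative L) (at z)"
  shows "((\<lambda>s. G (z + (s - s0) *\<^sub>R d)) has_real_derivative L d) (at s0)"
proof -
  have l: "linear L" using assms has_derivative_linear by blast
  have 1: "((\<lambda>s. z + (s - s0) *\<^sub>R d) has_derivative (\<lambda>h. h *\<^sub>R d)) (at s0)"
    by (auto intro!: derivative_eq_intros)
  have 2: "(G has_derivative L) (at (z + (s0 - s0) *\<^sub>R d))" using assms by simp
  have "((\<lambda>s. G (z + (s - s0) *\<^sub>R d)) has_derivative (\<lambda>h. L (h *\<^sub>R d))) (at s0)"
    using has_derivative_compose[OF 1 2] by (simp add: o_def)
  moreover have "(\<lambda>h. L (h *\<^sub>R d)) = (\<lambda>h. L d * h)"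
    using linear_scale[OF l] by (auto simp: mult.commute)
  ultimately show ?thesis by (simp add: has_field_derivative_def)
qed

lemma deriv_left_max:
  fixes g :: "real \<Rightarrow> real"
  assumes "(g has_real_derivative D) (at t)" "e > 0" "\<And>h. 0 < h \<Longrightarrow> h < e \<Longrightarrow> g (t - h) \<le> g t"
  shows "D \<ge> 0"
proof (rule ccontr)
  assume "\<not> D \<ge> 0"
  then obtain d where d: "d > 0" "\<forall>h>0. h < d \<longrightarrow> g t < g (t - h)"
    using DERIV_neg_dec_left[OF assms(1)] by force
  let ?h = "min d e / 2"
  have "g t < g (t - ?h)" using d assms(2) by simp
  moreover have "g (t - ?h) \<le> g t" using assms(3)[of ?h] d assms(2) by simp
  ultimately show False by simp
qed

lemma deriv_left_min:
  fixes g :: "real \<Rightarrow> real"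
  assumes "(g has_real_derivative D) (at t)" "e > 0" "\<And>h. 0 < h \<Longrightarrow> h < e \<Longrightarrow> g t \<le> g (t - h)"
  shows "D \<le> 0"
proof (rule ccontr)
  assume "\<not> D \<le> 0"
  then obtain d where d: "d > 0" "\<forall>h>0. h < d \<longrightarrow> g (t - h) < g t"
    using DERIV_pos_inc_left[OF assms(1)] by force
  let ?h = "min d e / 2"
  have "g (t - ?h) < g t" using d assms(2) by simp
  moreover have "g t \<le> g (t - ?h)" using assms(3)[of ?h] d assms(2) by simp
  ultimately show False by simp
qed



lemma relax_deriv:
  fixes v :: "real^'n"
  assumes p: "p > 0" and s: "\<sigma> > 0" and th: "\<theta> > 0"
  shows "\<exists>D. ((\<lambda>h. \<sigma> * (\<theta> - norm (v + h *\<^sub>R axis i 1) powr p) * (v$i + h)) has_real_derivative D) (at 0)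
           \<and> D \<ge> - \<sigma> * (1 + p) * norm v powr p"
proof (cases "v = 0")
  case True
  have eq: "(\<lambda>h. \<sigma> * (\<theta> - norm (v + h *\<^sub>R axis i 1) powr p) * (v$i + h)) = (\<lambda>h. \<sigma> * (\<theta> - \<bar>h\<bar> powr p) * h)"
    using True by (auto simp: fun_eq_iff)
  have lim: "((\<lambda>h. \<bar>h\<bar> powr p) \<longlongrightarrow> 0) (at (0::real))"
    by (rule tendsto_zero_powrI) (auto intro!: tendsto_eq_intros simp: p)
  have "((\<lambda>h. \<sigma> * (\<theta> - \<bar>h\<bar> powr p)) \<longlongrightarrow> \<sigma> * (\<theta> - 0)) (at (0::real))"
    by (intro tendsto_intros lim)
  then have l2: "((\<lambda>h. \<sigma> * (\<theta> - \<bar>h\<bar> powr p)) \<longlongrightarrow> \<sigma> * \<theta>) (at (0::real))" by simp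
  have ev: "\<forall>\<^sub>F y in at (0::real). \<sigma> * (\<theta> - \<bar>y\<bar> powr p) = (\<sigma> * (\<theta> - \<bar>y\<bar> powr p) * y - \<sigma> * (\<theta> - \<bar>0\<bar> powr p) * 0) / (y - 0)"
    by (auto simp: eventually_at_filter)
  have "((\<lambda>y. (\<sigma> * (\<theta> - \<bar>y\<bar> powr p) * y - \<sigma> * (\<theta> - \<bar>0\<bar> powr p) * 0) / (y - 0)) \<longlongrightarrow> \<sigma> * \<theta>) (at (0::real))"
    by (rule Lim_transform_eventually[OF l2 ev])
  then have "((\<lambda>h. \<sigma> * (\<theta> - \<bar>h\<bar> powr p) * h) has_real_derivative \<sigma> * \<theta>) (at 0)"
    by (simp add: has_field_derivative_iff)
  moreover have "\<sigma> * \<theta> \<ge> - \<sigma> * (1 + p) * norm v powr p" using True s th by simp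
  ultimately show ?thesis unfolding eq by blast
next
  case False
  have n0: "norm v > 0" using False by simp
  have dn: "((\<lambda>h. norm (v + (h - 0) *\<^sub>R axis i 1)) has_real_derivative inner (axis i 1) (sgn v)) (at 0)"
    by (rule line_deriv[OF has_derivative_norm[OF False]])
  have ia: "inner (axis i (1::real)) (sgn v) = v$i / norm v"
    by (simp add: inner_axis' sgn_div_norm divide_inverse mult.commute)
  have dn': "((\<lambda>h. norm (v + h *\<^sub>R axis i 1)) has_real_derivative v$i / norm v) (at 0)"
    using dn ia by simp
  have dp: "((\<lambda>h. norm (v + h *\<^sub>R axis i 1) powr p) has_real_derivative p * norm v powr (p - 1) * (v$i / norm v)) (at 0)"
    using DERIV_fun_powr[OF dn', of p] n0 by simp
  have dv: "((\<lambda>h. v$i + h) has_real_derivative 1) (at 0)" by (auto intro!: derivative_eq_intros)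
  define D where "D = \<sigma> * (- (p * norm v powr (p - 1) * (v$i / norm v)) * v$i + (\<theta> - norm v powr p) * 1)"
  have der: "((\<lambda>h. \<sigma> * (\<theta> - norm (v + h *\<^sub>R axis i 1) powr p) * (v$i + h)) has_real_derivative D) (at 0)"
  proof -
    have a: "((\<lambda>h. \<theta> - norm (v + h *\<^sub>R axis i 1) powr p) has_real_derivative 0 - p * norm v powr (p - 1) * (v$i / norm v)) (at 0)"
      by (rule DERIV_diff[OF DERIV_const dp])
    have b: "((\<lambda>h. \<sigma> * (\<theta> - norm (v + h *\<^sub>R axis i 1) powr p)) has_real_derivative \<sigma> * (0 - p * norm v powr (p - 1) * (v$i / norm v))) (at 0)"
      by (rule DERIV_cmult[OF a])
    note c = DERIV_mult[OF b dv]
    show ?thesis unfolding D_def using c by (simp add: algebra_simps)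
  qed
  have "norm v powr (p - 1) = norm v powr p / norm v" using n0 by (simp add: powr_diff)
  then have e1: "p * norm v powr (p - 1) * (v$i / norm v) * v$i = p * norm v powr p * ((v$i)^2 / (norm v)^2)"
    by (simp add: power2_eq_square field_simps)
  have "(v$i)^2 \<le> (norm v)^2" using component_le_norm_cart[of v i]
    by (metis abs_ge_zero power2_abs power_mono)
  then have "(v$i)^2 / (norm v)^2 \<le> 1" using n0 by simp
  then have "p * norm v powr p * ((v$i)^2 / (norm v)^2) \<le> p * norm v powr p"
    using p mult_left_le[of "(v$i)^2 / (norm v)^2" "p * norm v powr p"] by simp
  then have "p * norm v powr (p - 1) * (v$i / norm v) * v$i \<le> p * norm v powr p" using e1 by simp
  then have "D \<ge> \<sigma> * (- (p * norm v powr p) + (\<theta> - norm v powr p))"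
    unfolding D_def using s by (intro mult_left_mono) auto
  moreover have "\<sigma> * (- (p * norm v powr p) + (\<theta> - norm v powr p)) \<ge> - \<sigma> * (1 + p) * norm v powr p"
    using s th by (simp add: algebra_simps)
  ultimately show ?thesis using der by force
qed



locale kin =
  fixes \<phi> :: "real \<Rightarrow> real" and \<sigma> p \<kappa> :: real
    and f0 :: "real^'n \<Rightarrow> real^'n \<Rightarrow> real \<Rightarrow> real"
    and f :: "real \<Rightarrow> real^'n \<Rightarrow> real^'n \<Rightarrow> real \<Rightarrow> real"
    and \<l> :: "real^'n \<Rightarrow> real"
  assumes smooth: "smooth_on_nonneg \<phi>"
    and phi_nn: "\<forall>r\<ge>0. \<phi> r \<ge> 0"
    and phi_mono: "\<forall>r s. 0 \<le> r \<and> r \<le> s \<longrightarrow> \<phi> s \<le> \<phi> r"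
    and sig: "\<sigma> > 0" and pp: "p > 0" and kap: "\<kappa> > 0"
    and f0nn: "\<forall>z\<in>Omega. f0 (fst z) (fst (snd z)) (snd (snd z)) \<ge> 0"
    and sol: "kinetic_solution \<phi> \<sigma> p \<kappa> f0 f"
    and lin: "linear \<l>"
    and f0sup: "\<forall>(x0, v0, \<theta>0) \<in> supp_Omega (\<lambda>(x, v, \<theta>). f0 x v \<theta>). \<l> v0 \<ge> 0"
begin

definition G where "G = (\<lambda>(t, x, v, \<theta>). f t x v \<theta>)"
definition ff where "ff t z = f t (fst z) (fst (snd z)) (snd (snd z))"
definition wt where "wt t x z = \<phi> (norm (x - fst z)) * ff t z"

lemma Omega_iff: "z \<in> Omega \<longleftrightarrow> snd (snd z) > 0"
  by (cases z) (auto simp: Omega_def)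

lemma Omega_iff3: "(x, v, \<theta>) \<in> Omega \<longleftrightarrow> \<theta> > 0"
  by (auto simp: Omega_def)

lemma open_Omega: "open Omega"
  unfolding Omega_def by (intro open_Times) auto

lemma phi_cont: "continuous_on {0..} \<phi>"
proof -
  obtain d where d: "d 0 = \<phi>" "\<forall>k. \<forall>r\<ge>0. (d k has_real_derivative d (Suc k) r) (at r within {0..})"
    using smooth unfolding smooth_on_nonneg_def by blast
  have "continuous (at r within {0..}) \<phi>" if "r \<in> {0..}" for r
  proof -
    have "(d 0 has_real_derivative d (Suc 0) r) (at r within {0..})" using d(2) that by simp
    then show ?thesis using d(1) by (metis DERIV_continuous)
  qed
  then show ?thesis unfolding continuous_on_eq_continuous_within by blast
qed

lemma phi_le0: "r \<ge> 0 \<Longrightarrow> \<phi> r \<le> \<phi> 0" using phi_mono by auto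

lemma G_cont: "continuous_on ({0..} \<times> Omega) G"
  using sol unfolding kinetic_solution_def G_def by blast

lemma ff_G: "ff t z = G (t, z)"
  by (cases z) (auto simp: ff_def G_def)

lemma ff_cont: "t \<ge> 0 \<Longrightarrow> continuous_on Omega (ff t)"
proof -
  assume t: "t \<ge> 0"
  have "continuous_on Omega (G \<circ> (\<lambda>z. (t, z)))"
    by (rule continuous_on_compose[OF _ continuous_on_subset[OF G_cont]]) (auto intro!: continuous_intros simp: t)
  then show ?thesis by (simp add: o_def ff_G[abs_def])
qed

lemma ffc_cont: "continuous_on ({0..} \<times> Omega) (\<lambda>q. ff (fst q) (snd q))"
  using G_cont by (simp add: ff_G)

lemma C1: "\<exists>g'. \<forall>q\<in>{0<..} \<times> Omega. (G has_derivative blinfun_apply (g' q)) (at q)"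
  using sol unfolding kinetic_solution_def C1_on_def G_def by blast

definition gd where "gd = (SOME g'. \<forall>q\<in>{0<..} \<times> Omega. (G has_derivative blinfun_apply (g' q)) (at q))"

lemma gd: "q \<in> {0<..} \<times> Omega \<Longrightarrow> (G has_derivative blinfun_apply (gd q)) (at q)"
  using someI_ex[OF C1] unfolding gd_def by blast

lemma supp_K: "T \<ge> 0 \<Longrightarrow> \<exists>K. compact K \<and> K \<subseteq> Omega \<and> (\<forall>t\<in>{0..T}. \<forall>z\<in>Omega. z \<notin> K \<longrightarrow> ff t z = 0)"
proof -
  assume T: "T \<ge> 0"
  have "\<forall>T\<ge>0. \<exists>K. compact K \<and> K \<subseteq> Omega \<and>
        (\<forall>t\<in>{0..T}. supp_Omega (\<lambda>(x, v, \<theta>). f t x v \<theta>) \<subseteq> K)"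
    using sol unfolding kinetic_solution_def by (elim conjE) assumption
  then obtain K where K: "compact K" "K \<subseteq> Omega"
     "\<forall>t\<in>{0..T}. supp_Omega (\<lambda>(x, v, \<theta>). f t x v \<theta>) \<subseteq> K"
    using T by blast
  have "ff t z = 0" if "t \<in> {0..T}" "z \<in> Omega" "z \<notin> K" for t z
  proof (rule ccontr)
    assume ne: "ff t z \<noteq> 0"
    obtain a b c where abc: "z = (a, b, c)" by (cases z)
    have "f t a b c \<noteq> 0" using ne by (simp add: ff_def abc)
    then have "z \<in> {z \<in> Omega. (\<lambda>(x, v, \<theta>). f t x v \<theta>) z \<noteq> 0}" using that(2) abc
      by simp
    then have "z \<in> closure {z \<in> Omega. (\<lambda>(x, v, \<theta>). f t x v \<theta>) z \<noteq> 0}"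
      by (rule subsetD[OF closure_subset])
    then have zs: "z \<in> supp_Omega (\<lambda>(x, v, \<theta>). f t x v \<theta>)"
      unfolding supp_Omega_def using that(2) by (rule_tac IntI)
    have "supp_Omega (\<lambda>(x, v, \<theta>). f t x v \<theta>) \<subseteq> K" using K(3) that(1) by (rule bspec)
    then show False using zs that(3) by (rule_tac notE[OF that(3)]) (erule subsetD)
  qed
  then show ?thesis using K by blast
qed

lemma init: "z \<in> Omega \<Longrightarrow> ff 0 z = f0 (fst z) (fst (snd z)) (snd (snd z))"
proof -
  assume z: "z \<in> Omega"
  have h: "\<forall>x v \<theta>. (x, v, \<theta>) \<in> Omega \<longrightarrow> f 0 x v \<theta> = f0 x v \<theta>"
    using sol unfolding kinetic_solution_def by (elim conjE) assumption
  obtain a b c where abc: "z = (a, b, c)" by (cases z)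
  show ?thesis using h z unfolding abc ff_def by simp
qed

lemma f0_zero: "z \<in> Omega \<Longrightarrow> \<l> (fst (snd z)) < 0 \<Longrightarrow> ff 0 z = 0"
proof (rule ccontr)
  assume z: "z \<in> Omega" "\<l> (fst (snd z)) < 0" "ff 0 z \<noteq> 0"
  obtain a b c where abc: "z = (a, b, c)" by (cases z)
  have "f0 a b c \<noteq> 0" using z init[OF z(1)] by (simp add: abc)
  then have "z \<in> {z \<in> Omega. (\<lambda>(x, v, \<theta>). f0 x v \<theta>) z \<noteq> 0}"
    using z(1) abc by simp
  then have "z \<in> closure {z \<in> Omega. (\<lambda>(x, v, \<theta>). f0 x v \<theta>) z \<noteq> 0}"
      by (rule subsetD[OF closure_subset])
  then have zs: "z \<in> supp_Omega (\<lambda>(x, v, \<theta>). f0 x v \<theta>)"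
      unfolding supp_Omega_def using z(1) by (rule_tac IntI)
  have "\<l> b \<ge> 0" using f0sup zs unfolding abc by auto
  then show False using z(2) abc by simp
qed

lemma f0_nonneg: "z \<in> Omega \<Longrightarrow> ff 0 z \<ge> 0"
  using init f0nn by simp

lemma dt: assumes "t > 0" "(x, v, \<theta>) \<in> Omega"
  shows "((\<lambda>s. f s x v \<theta>) has_real_derivative gd (t, x, v, \<theta>) (1, 0, 0, 0)) (at t)"
proof -
  have "((\<lambda>s. G ((t, x, v, \<theta>) + (s - t) *\<^sub>R (1, 0, 0, 0))) has_real_derivative gd (t, x, v, \<theta>) (1, 0, 0, 0)) (at t)"
    by (rule line_deriv[OF gd]) (use assms in auto)
  then show ?thesis by (simp add: G_def)
qed

lemma dx: assumes "t > 0" "(x, v, \<theta>) \<in> Omega"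
  shows "((\<lambda>h. f t (x + h *\<^sub>R e) v \<theta>) has_real_derivative gd (t, x, v, \<theta>) (0, e, 0, 0)) (at 0)"
proof -
  have "((\<lambda>h. G ((t, x, v, \<theta>) + (h - 0) *\<^sub>R (0, e, 0, 0))) has_real_derivative gd (t, x, v, \<theta>) (0, e, 0, 0)) (at 0)"
    by (rule line_deriv[OF gd]) (use assms in auto)
  then show ?thesis by (simp add: G_def)
qed

lemma dv: assumes "t > 0" "(x, v, \<theta>) \<in> Omega"
  shows "((\<lambda>h. f t x (v + h *\<^sub>R e) \<theta>) has_real_derivative gd (t, x, v, \<theta>) (0, 0, e, 0)) (at 0)"
proof -
  have "((\<lambda>h. G ((t, x, v, \<theta>) + (h - 0) *\<^sub>R (0, 0, e, 0))) has_real_derivative gd (t, x, v, \<theta>) (0, 0, e, 0)) (at 0)"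
    by (rule line_deriv[OF gd]) (use assms in auto)
  then show ?thesis by (simp add: G_def)
qed

lemma dth: assumes "t > 0" "(x, v, \<theta>) \<in> Omega"
  shows "((\<lambda>\<eta>. f t x v \<eta>) has_real_derivative gd (t, x, v, \<theta>) (0, 0, 0, 1)) (at \<theta>)"
proof -
  have "((\<lambda>s. G ((t, x, v, \<theta>) + (s - \<theta>) *\<^sub>R (0, 0, 0, 1))) has_real_derivative gd (t, x, v, \<theta>) (0, 0, 0, 1)) (at \<theta>)"
    by (rule line_deriv[OF gd]) (use assms in auto)
  then show ?thesis by (simp add: G_def)
qed

end


context kin begin

lemma blin: "bounded_linear \<l>" using lin linear_conv_bounded_linear by blast

lemma l_cont: "continuous_on S \<l>" using blin linear_continuous_on by blast

lemma wt_cont: "t \<ge> 0 \<Longrightarrow> continuous_on Omega (wt t x)"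
proof -
  assume t: "t \<ge> 0"
  have "continuous_on Omega (\<lambda>z. \<phi> (norm (x - fst z)))"
    by (rule continuous_on_compose2[OF phi_cont]) (auto intro!: continuous_intros)
  then show ?thesis unfolding wt_def[abs_def] using ff_cont[OF t] by (intro continuous_intros) auto
qed

lemma wt_int:
  fixes c :: "_ \<Rightarrow> 'b::euclidean_space"
  assumes t: "t \<ge> 0" and c: "continuous_on Omega c"
  shows "(\<lambda>z. wt t x z *\<^sub>R c z) integrable_on Omega"
proof -
  obtain K where K: "compact K" "K \<subseteq> Omega" "\<forall>s\<in>{0..t}. \<forall>z\<in>Omega. z \<notin> K \<longrightarrow> ff s z = 0"
    using supp_K[OF t] by blast
  show ?thesis
  proof (rule int_on_compact_supp[OF _ K(1,2)])
    show "continuous_on Omega (\<lambda>z. wt t x z *\<^sub>R c z)"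
      using wt_cont[OF t] c by (intro continuous_intros)
    fix z assume "z \<in> Omega" "z \<notin> K"
    then have "ff t z = 0" using K(3) t by auto
    then show "wt t x z *\<^sub>R c z = 0" by (simp add: wt_def)
  qed
qed

lemma wt_int0: "t \<ge> 0 \<Longrightarrow> wt t x integrable_on Omega"
  using wt_int[of t "\<lambda>z. 1::real" x] by simp

lemma wt_int_v: "t \<ge> 0 \<Longrightarrow> (\<lambda>z. wt t x z *\<^sub>R fst (snd z)) integrable_on Omega"
  by (rule wt_int) (auto intro!: continuous_intros)

lemma wt_int_th: "t \<ge> 0 \<Longrightarrow> (\<lambda>z. wt t x z * snd (snd z)) integrable_on Omega"
proof -
  assume t: "t \<ge> 0"
  have "continuous_on Omega (\<lambda>z. snd (snd z))" by (auto intro!: continuous_intros)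
  then show ?thesis using wt_int[OF t, of "\<lambda>z. snd (snd z)" x] by simp
qed

lemma wt_int_l: "t \<ge> 0 \<Longrightarrow> (\<lambda>z. wt t x z * \<l> (fst (snd z))) integrable_on Omega"
proof -
  assume t: "t \<ge> 0"
  have "continuous_on Omega (\<lambda>z. \<l> (fst (snd z)))"
    by (rule continuous_on_compose2[OF l_cont]) (auto intro!: continuous_intros)
  then show ?thesis using wt_int[OF t, of "\<lambda>z. \<l> (fst (snd z))" x] by simp
qed

lemma alignF_eq:
  assumes t: "t \<ge> 0"
  shows "alignF \<phi> f t x v' = integral Omega (\<lambda>z. wt t x z *\<^sub>R fst (snd z)) - integral Omega (wt t x) *\<^sub>R v'"
proof -
  have eq: "(\<lambda>(y, w, \<eta>). (\<phi> (norm (x - y)) * f t y w \<eta>) *\<^sub>R (w - v')) = (\<lambda>z. wt t x z *\<^sub>R fst (snd z) - wt t x z *\<^sub>R v')"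
    by (auto simp: fun_eq_iff wt_def ff_def scaleR_diff_right)
  have "integral Omega (\<lambda>z. wt t x z *\<^sub>R v') = integral Omega (wt t x) *\<^sub>R v'"
    by (rule integral_unique[OF has_integral_scaleR_left[OF integrable_integral[OF wt_int0[OF t]]]])
  moreover have "(\<lambda>z. wt t x z *\<^sub>R v') integrable_on Omega"
    by (rule integrable_on_scaleR_left[OF wt_int0[OF t]])
  ultimately show ?thesis
    unfolding alignF_def eq using integral_diff[OF wt_int_v[OF t]] by simp
qed

lemma alignTheta_eq:
  assumes t: "t \<ge> 0"
  shows "alignTheta \<kappa> \<phi> f t x \<theta>' = \<kappa> * (integral Omega (\<lambda>z. wt t x z * snd (snd z)) - \<theta>' * integral Omega (wt t x))"
proof -
  have eq: "(\<lambda>(y, w, \<eta>). \<phi> (norm (x - y)) * (\<eta> - \<theta>') * f t y w \<eta>) = (\<lambda>z. wt t x z * snd (snd z) - \<theta>' * wt t x z)"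
    by (auto simp: fun_eq_iff wt_def ff_def algebra_simps)
  have i2: "(\<lambda>z. \<theta>' * wt t x z) integrable_on Omega"
    by (rule integrable_on_mult_right[OF wt_int0[OF t]])
  show ?thesis
    unfolding alignTheta_def eq using integral_diff[OF wt_int_th[OF t] i2] by simp
qed

lemma l_alignF:
  assumes t: "t \<ge> 0"
  shows "\<l> (alignF \<phi> f t x v') = integral Omega (\<lambda>z. wt t x z * (\<l> (fst (snd z)) - \<l> v'))"
proof -
  have a: "\<l> (integral Omega (\<lambda>z. wt t x z *\<^sub>R fst (snd z))) = integral Omega (\<lambda>z. wt t x z * \<l> (fst (snd z)))"
    using integral_linear[OF wt_int_v[OF t] blin] linear_scale[OF lin]
    by (simp add: o_def)
  have i2: "(\<lambda>z. wt t x z * \<l> v') integrable_on Omega"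
    by (rule integrable_on_mult_left[OF wt_int0[OF t]])
  have "integral Omega (\<lambda>z. wt t x z * (\<l> (fst (snd z)) - \<l> v'))
      = integral Omega (\<lambda>z. wt t x z * \<l> (fst (snd z))) - integral Omega (wt t x) * \<l> v'"
    using integral_diff[OF wt_int_l[OF t] i2] by (simp add: algebra_simps)
  then show ?thesis
    unfolding alignF_eq[OF t] using a linear_diff[OF lin] linear_scale[OF lin] by simp
qed

end


context kin begin

lemma pde_raw:
  assumes t: "t > 0" and z: "(x, v, \<theta>) \<in> Omega"
  shows "deriv (\<lambda>s. f s x v \<theta>) t
        + (\<Sum>i\<in>UNIV. v $ i * deriv (\<lambda>h. f t (x + h *\<^sub>R axis i 1) v \<theta>) 0)
        + (\<Sum>i\<in>UNIV. deriv (\<lambda>h. (f t x (v + h *\<^sub>R axis i 1) \<theta>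
              *\<^sub>R alignF \<phi> f t x (v + h *\<^sub>R axis i 1)) $ i) 0)
        + (\<Sum>i\<in>UNIV. deriv (\<lambda>h. (f t x (v + h *\<^sub>R axis i 1) \<theta>
              *\<^sub>R relaxR \<sigma> p (v + h *\<^sub>R axis i 1) \<theta>) $ i) 0)
        + deriv (\<lambda>\<eta>. f t x v \<eta> * alignTheta \<kappa> \<phi> f t x \<eta>) \<theta>
        = 0"
proof -
  have H: "\<forall>t>0. \<forall>x v \<theta>. (x, v, \<theta>) \<in> Omega \<longrightarrow>
        deriv (\<lambda>s. f s x v \<theta>) t
        + (\<Sum>i\<in>UNIV. v $ i * deriv (\<lambda>h. f t (x + h *\<^sub>R axis i 1) v \<theta>) 0)
        + (\<Sum>i\<in>UNIV. deriv (\<lambda>h. (f t x (v + h *\<^sub>R axis i 1) \<theta>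
              *\<^sub>R alignF \<phi> f t x (v + h *\<^sub>R axis i 1)) $ i) 0)
        + (\<Sum>i\<in>UNIV. deriv (\<lambda>h. (f t x (v + h *\<^sub>R axis i 1) \<theta>
              *\<^sub>R relaxR \<sigma> p (v + h *\<^sub>R axis i 1) \<theta>) $ i) 0)
        + deriv (\<lambda>\<eta>. f t x v \<eta> * alignTheta \<kappa> \<phi> f t x \<eta>) \<theta>
        = 0"
    using sol unfolding kinetic_solution_def by (elim conjE) assumption
  show ?thesis by (rule H[rule_format, OF t z])
qed

lemma pde_point:
  assumes t: "t > 0" and z: "(x, v, \<theta>) \<in> Omega"
  shows "\<exists>Rd::'n \<Rightarrow> real. (\<forall>i. Rd i \<ge> - \<sigma> * (1 + p) * norm v powr p) \<and>
     gd (t, x, v, \<theta>) (1, 0, 0, 0)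
   + (\<Sum>i\<in>UNIV. v $ i * gd (t, x, v, \<theta>) (0, axis i 1, 0, 0))
   + (\<Sum>i\<in>UNIV. gd (t, x, v, \<theta>) (0, 0, axis i 1, 0) * ((alignF \<phi> f t x v) $ i + (relaxR \<sigma> p v \<theta>) $ i))
   + gd (t, x, v, \<theta>) (0, 0, 0, 1) * alignTheta \<kappa> \<phi> f t x \<theta>
   + f t x v \<theta> * ((\<Sum>i\<in>UNIV. Rd i) - (real CARD('n) + \<kappa>) * integral Omega (wt t x)) = 0"
proof -
  have t0: "t \<ge> 0" using t by simp
  have th: "\<theta> > 0" using z by (simp add: Omega_iff3)
  define q where "q = (t, x, v, \<theta>)"
  define A0 where "A0 = integral Omega (wt t x)"
  define A1 where "A1 = integral Omega (\<lambda>z. wt t x z *\<^sub>R fst (snd z))"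
  define B1 where "B1 = integral Omega (\<lambda>z. wt t x z * snd (snd z))"
  define fv where "fv = f t x v \<theta>"
  have ex: "\<forall>i. \<exists>D. ((\<lambda>h. \<sigma> * (\<theta> - norm (v + h *\<^sub>R axis i 1) powr p) * (v$i + h)) has_real_derivative D) (at 0)
           \<and> D \<ge> - \<sigma> * (1 + p) * norm v powr p"
    by (rule allI, rule relax_deriv[OF pp sig th])
  obtain Rd where Rd0: "\<forall>i. ((\<lambda>h. \<sigma> * (\<theta> - norm (v + h *\<^sub>R axis i 1) powr p) * (v$i + h)) has_real_derivative Rd i) (at 0)
           \<and> Rd i \<ge> - \<sigma> * (1 + p) * norm v powr p"
    using choice[OF ex] by (elim exE)
  have Rd: "\<And>i. ((\<lambda>h. \<sigma> * (\<theta> - norm (v + h *\<^sub>R axis i 1) powr p) * (v$i + h)) has_real_derivative Rd i) (at 0)"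
     "\<And>i. Rd i \<ge> - \<sigma> * (1 + p) * norm v powr p"
    using Rd0 by auto
  have T1: "deriv (\<lambda>s. f s x v \<theta>) t = gd q (1, 0, 0, 0)"
    unfolding q_def by (rule DERIV_imp_deriv[OF dt[OF t z]])
  have T2: "deriv (\<lambda>h. f t (x + h *\<^sub>R axis i 1) v \<theta>) 0 = gd q (0, axis i 1, 0, 0)" for i
    unfolding q_def by (rule DERIV_imp_deriv[OF dx[OF t z]])
  have T3: "deriv (\<lambda>h. (f t x (v + h *\<^sub>R axis i 1) \<theta>
              *\<^sub>R alignF \<phi> f t x (v + h *\<^sub>R axis i 1)) $ i) 0
         = gd q (0, 0, axis i 1, 0) * (alignF \<phi> f t x v) $ i + (- A0) * fv" for i
  proof -
    have eq: "(\<lambda>h. (f t x (v + h *\<^sub>R axis i 1) \<theta> *\<^sub>R alignF \<phi> f t x (v + h *\<^sub>R axis i 1)) $ i)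
        = (\<lambda>h. f t x (v + h *\<^sub>R axis i 1) \<theta> * (A1 $ i - A0 * (v $ i + h)))"
      by (simp add: fun_eq_iff alignF_eq[OF t0] A0_def A1_def)
    have d2: "((\<lambda>h. A1 $ i - A0 * (v $ i + h)) has_real_derivative - A0) (at 0)"
      by (auto intro!: derivative_eq_intros)
    have "((\<lambda>h. f t x (v + h *\<^sub>R axis i 1) \<theta> * (A1 $ i - A0 * (v $ i + h))) has_real_derivative
        gd q (0, 0, axis i 1, 0) * (A1 $ i - A0 * (v $ i + 0)) + (- A0) * f t x (v + 0 *\<^sub>R axis i 1) \<theta>) (at 0)"
      unfolding q_def by (rule DERIV_mult[OF dv[OF t z] d2])
    moreover have "(alignF \<phi> f t x v) $ i = A1 $ i - A0 * v $ i"
      by (simp add: alignF_eq[OF t0] A0_def A1_def)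
    ultimately show ?thesis unfolding eq fv_def by (simp add: DERIV_imp_deriv)
  qed
  have T4: "deriv (\<lambda>h. (f t x (v + h *\<^sub>R axis i 1) \<theta>
              *\<^sub>R relaxR \<sigma> p (v + h *\<^sub>R axis i 1) \<theta>) $ i) 0
         = gd q (0, 0, axis i 1, 0) * (relaxR \<sigma> p v \<theta>) $ i + Rd i * fv" for i
  proof -
    have eq: "(\<lambda>h. (f t x (v + h *\<^sub>R axis i 1) \<theta> *\<^sub>R relaxR \<sigma> p (v + h *\<^sub>R axis i 1) \<theta>) $ i)
        = (\<lambda>h. f t x (v + h *\<^sub>R axis i 1) \<theta> * (\<sigma> * (\<theta> - norm (v + h *\<^sub>R axis i 1) powr p) * (v$i + h)))"
      by (simp add: fun_eq_iff relaxR_def)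
    have "((\<lambda>h. f t x (v + h *\<^sub>R axis i 1) \<theta> * (\<sigma> * (\<theta> - norm (v + h *\<^sub>R axis i 1) powr p) * (v$i + h))) has_real_derivative
        gd q (0, 0, axis i 1, 0) * (\<sigma> * (\<theta> - norm (v + 0 *\<^sub>R axis i 1) powr p) * (v$i + 0)) + Rd i * f t x (v + 0 *\<^sub>R axis i 1) \<theta>) (at 0)"
      unfolding q_def by (rule DERIV_mult[OF dv[OF t z] Rd(1)])
    moreover have "(relaxR \<sigma> p v \<theta>) $ i = \<sigma> * (\<theta> - norm v powr p) * v $ i"
      by (simp add: relaxR_def)
    ultimately show ?thesis unfolding eq fv_def by (simp add: DERIV_imp_deriv)
  qed
  have T5: "deriv (\<lambda>\<eta>. f t x v \<eta> * alignTheta \<kappa> \<phi> f t x \<eta>) \<theta>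
         = gd q (0, 0, 0, 1) * alignTheta \<kappa> \<phi> f t x \<theta> + (- \<kappa> * A0) * fv"
  proof -
    have eq: "(\<lambda>\<eta>. f t x v \<eta> * alignTheta \<kappa> \<phi> f t x \<eta>) = (\<lambda>\<eta>. f t x v \<eta> * (\<kappa> * (B1 - \<eta> * A0)))"
      by (simp add: fun_eq_iff alignTheta_eq[OF t0] A0_def B1_def)
    have d2: "((\<lambda>\<eta>. \<kappa> * (B1 - \<eta> * A0)) has_real_derivative - \<kappa> * A0) (at \<theta>)"
      by (auto intro!: derivative_eq_intros)
    have "((\<lambda>\<eta>. f t x v \<eta> * (\<kappa> * (B1 - \<eta> * A0))) has_real_derivative
        gd q (0, 0, 0, 1) * (\<kappa> * (B1 - \<theta> * A0)) + (- \<kappa> * A0) * f t x v \<theta>) (at \<theta>)"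
      unfolding q_def by (rule DERIV_mult[OF dth[OF t z] d2])
    moreover have "alignTheta \<kappa> \<phi> f t x \<theta> = \<kappa> * (B1 - \<theta> * A0)"
      by (simp add: alignTheta_eq[OF t0] A0_def B1_def)
    ultimately show ?thesis unfolding eq fv_def by (simp add: DERIV_imp_deriv)
  qed
  have P: "gd q (1, 0, 0, 0)
        + (\<Sum>i\<in>UNIV. v $ i * gd q (0, axis i 1, 0, 0))
        + (\<Sum>i\<in>UNIV. gd q (0, 0, axis i 1, 0) * (alignF \<phi> f t x v) $ i + (- A0) * fv)
        + (\<Sum>i\<in>UNIV. gd q (0, 0, axis i 1, 0) * (relaxR \<sigma> p v \<theta>) $ i + Rd i * fv)
        + (gd q (0, 0, 0, 1) * alignTheta \<kappa> \<phi> f t x \<theta> + (- \<kappa> * A0) * fv) = 0"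
    using pde_raw[OF t z] unfolding T1 T2 T3 T4 T5 .
  have "gd q (1, 0, 0, 0)
   + (\<Sum>i\<in>UNIV. v $ i * gd q (0, axis i 1, 0, 0))
   + (\<Sum>i\<in>UNIV. gd q (0, 0, axis i 1, 0) * ((alignF \<phi> f t x v) $ i + (relaxR \<sigma> p v \<theta>) $ i))
   + gd q (0, 0, 0, 1) * alignTheta \<kappa> \<phi> f t x \<theta>
   + fv * ((\<Sum>i\<in>UNIV. Rd i) - (real CARD('n) + \<kappa>) * A0) = 0"
  proof -
    have s1: "(\<Sum>i\<in>UNIV. gd q (0, 0, axis i 1, 0) * (alignF \<phi> f t x v) $ i + (- A0) * fv)
       = (\<Sum>i\<in>UNIV. gd q (0, 0, axis i 1, 0) * (alignF \<phi> f t x v) $ i) + real CARD('n) * ((- A0) * fv)"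
      by (simp add: sum.distrib sum_subtractf)
    have s2: "(\<Sum>i\<in>UNIV. gd q (0, 0, axis i 1, 0) * (relaxR \<sigma> p v \<theta>) $ i + Rd i * fv)
       = (\<Sum>i\<in>UNIV. gd q (0, 0, axis i 1, 0) * (relaxR \<sigma> p v \<theta>) $ i) + (\<Sum>i\<in>UNIV. Rd i) * fv"
      by (simp add: sum.distrib sum_distrib_right)
    have s3: "(\<Sum>i\<in>UNIV. gd q (0, 0, axis i 1, 0) * ((alignF \<phi> f t x v) $ i + (relaxR \<sigma> p v \<theta>) $ i))
       = (\<Sum>i\<in>UNIV. gd q (0, 0, axis i 1, 0) * (alignF \<phi> f t x v) $ i) + (\<Sum>i\<in>UNIV. gd q (0, 0, axis i 1, 0) * (relaxR \<sigma> p v \<theta>) $ i)"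
      by (simp add: distrib_left sum.distrib)
    have s4: "fv * ((\<Sum>i\<in>UNIV. Rd i) - (real CARD('n) + \<kappa>) * A0)
       = (\<Sum>i\<in>UNIV. Rd i) * fv + real CARD('n) * ((- A0) * fv) + (- \<kappa> * A0) * fv"
      by (simp add: algebra_simps)
    show ?thesis using P unfolding s1 s2 s3 s4 by linarith
  qed
  then have E: "gd (t, x, v, \<theta>) (1, 0, 0, 0)
   + (\<Sum>i\<in>UNIV. v $ i * gd (t, x, v, \<theta>) (0, axis i 1, 0, 0))
   + (\<Sum>i\<in>UNIV. gd (t, x, v, \<theta>) (0, 0, axis i 1, 0) * ((alignF \<phi> f t x v) $ i + (relaxR \<sigma> p v \<theta>) $ i))
   + gd (t, x, v, \<theta>) (0, 0, 0, 1) * alignTheta \<kappa> \<phi> f t x \<theta>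
   + f t x v \<theta> * ((\<Sum>i\<in>UNIV. Rd i) - (real CARD('n) + \<kappa>) * integral Omega (wt t x)) = 0"
    unfolding q_def fv_def A0_def .
  have R2: "\<forall>i. Rd i \<ge> - \<sigma> * (1 + p) * norm v powr p" using Rd(2) by (rule allI)
  show ?thesis by (rule exI[of _ Rd], rule conjI[OF R2 E])
qed

end


lemma arith1:
  fixes ph p0 fz f1 L W :: real
  assumes "0 \<le> ph" "ph \<le> p0" "0 \<le> fz" "f1 > 0" "L < 0" "W < L" "fz * W^2 \<le> f1 * L^2"
  shows "p0 * f1 * L / 4 \<le> ph * fz * (W - L)"
proof -
  define a where "a = - L"
  define U where "U = - W"
  have a: "a > 0" "U > a" using assms unfolding a_def U_def by auto
  have U2: "U^2 > 0" using a by simp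
  have fz: "fz \<le> f1 * a^2 / U^2"
    using assms(7) U2 unfolding a_def U_def by (simp add: field_simps)
  have q: "a * (U - a) \<le> U^2 / 4"
  proof -
    have "0 \<le> (U - 2 * a)^2" by simp
    then show ?thesis by (simp add: power2_eq_square algebra_simps)
  qed
  have "fz * (U - a) \<le> f1 * a^2 / U^2 * (U - a)"
    using fz a by (intro mult_right_mono) auto
  also have "\<dots> = f1 * a / U^2 * (a * (U - a))" by (simp add: power2_eq_square field_simps)
  also have "\<dots> \<le> f1 * a / U^2 * (U^2 / 4)"
    using q a assms(4) U2 by (intro mult_left_mono) auto
  also have "\<dots> = f1 * a / 4" using U2 by (simp add: field_simps)
  finally have "fz * (U - a) \<le> f1 * a / 4" .
  moreover have "ph * (fz * (U - a)) \<le> p0 * (fz * (U - a))"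
    using assms a by (intro mult_right_mono) auto
  moreover have "p0 * (fz * (U - a)) \<le> p0 * (f1 * a / 4)"
    using \<open>fz * (U - a) \<le> f1 * a / 4\<close> assms by (intro mult_left_mono) auto
  ultimately have "ph * (fz * (U - a)) \<le> p0 * (f1 * a / 4)" by linarith
  then have "ph * fz * (U - a) \<le> p0 * f1 * a / 4" by (simp add: mult.assoc)
  then show ?thesis unfolding a_def U_def by (simp add: algebra_simps)
qed



locale kinT = kin \<phi> \<sigma> p \<kappa> f0 f \<l>
  for \<phi> :: "real \<Rightarrow> real" and \<sigma> p \<kappa> :: real
    and f0 :: "real^'n \<Rightarrow> real^'n \<Rightarrow> real \<Rightarrow> real"
    and f :: "real \<Rightarrow> real^'n \<Rightarrow> real^'n \<Rightarrow> real \<Rightarrow> real"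
    and \<l> :: "real^'n \<Rightarrow> real" +
  fixes T :: real and K :: "((real^'n) \<times> (real^'n) \<times> real) set"
  assumes Tpos: "T > 0" and Kc: "compact K" and KO: "K \<subseteq> Omega"
    and suppK: "\<forall>t\<in>{0..T}. \<forall>z\<in>Omega. z \<notin> K \<longrightarrow> ff t z = 0"
begin

lemma offK: "t \<in> {0..T} \<Longrightarrow> z \<in> Omega \<Longrightarrow> z \<notin> K \<Longrightarrow> ff t z = 0"
  using suppK by blast

lemma M_ex: "\<exists>M. M \<ge> 0 \<and> (\<forall>t\<in>{0..T}. \<forall>z\<in>K. \<bar>ff t z\<bar> \<le> M)"
proof -
  have c: "continuous_on ({0..T} \<times> K) (\<lambda>q. ff (fst q) (snd q))"
    by (rule continuous_on_subset[OF ffc_cont]) (use KO in auto)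
  have "compact ((\<lambda>q. ff (fst q) (snd q)) ` ({0..T} \<times> K))"
    by (rule compact_continuous_image[OF c compact_Times[OF compact_Icc Kc]])
  then have "bounded ((\<lambda>q. ff (fst q) (snd q)) ` ({0..T} \<times> K))" by (rule compact_imp_bounded)
  then obtain a where a: "\<forall>y\<in>(\<lambda>q. ff (fst q) (snd q)) ` ({0..T} \<times> K). norm y \<le> a"
    unfolding Elementary_Metric_Spaces.bounded_iff by blast
  have "\<forall>t\<in>{0..T}. \<forall>z\<in>K. \<bar>ff t z\<bar> \<le> max a 0"
  proof (intro ballI)
    fix t z assume "t \<in> {0..T}" "z \<in> K"
    then have "ff t z \<in> (\<lambda>q. ff (fst q) (snd q)) ` ({0..T} \<times> K)"
      by (intro image_eqI[of _ _ "(t, z)"]) auto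
    then have "norm (ff t z) \<le> a" using a by blast
    then show "\<bar>ff t z\<bar> \<le> max a 0" by simp
  qed
  then show ?thesis by (intro exI[of _ "max a 0"]) auto
qed

definition M where "M = (SOME M. M \<ge> 0 \<and> (\<forall>t\<in>{0..T}. \<forall>z\<in>K. \<bar>ff t z\<bar> \<le> M))"

lemma M: "M \<ge> 0" "t \<in> {0..T} \<Longrightarrow> z \<in> K \<Longrightarrow> \<bar>ff t z\<bar> \<le> M"
  using someI_ex[OF M_ex] unfolding M_def by blast+

lemma B_ex: "\<exists>B. B \<ge> 0 \<and> (\<forall>z\<in>K. norm (fst (snd z)) \<le> B \<and> snd (snd z) \<le> B)"
proof -
  obtain a where a: "\<forall>z\<in>K. norm z \<le> a"
    using compact_imp_bounded[OF Kc] unfolding Elementary_Metric_Spaces.bounded_iff by blast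
  have "norm (fst (snd z)) \<le> max a 0 \<and> snd (snd z) \<le> max a 0" if "z \<in> K" for z
  proof -
    obtain x v th where z: "z = (x, v, th)" by (cases z)
    have "norm v \<le> norm (v, th)" by (rule norm_fst_le)
    moreover have "norm (v, th) \<le> norm z" unfolding z by (rule norm_snd_le)
    moreover have "\<bar>th\<bar> \<le> norm (v, th)" using norm_snd_le[of th v] by simp
    ultimately show ?thesis using a that z by fastforce
  qed
  then show ?thesis by (intro exI[of _ "max a 0"]) auto
qed

definition B where "B = (SOME B. B \<ge> 0 \<and> (\<forall>z\<in>K. norm (fst (snd z)) \<le> B \<and> snd (snd z) \<le> B))"

lemma B: "B \<ge> 0" "z \<in> K \<Longrightarrow> norm (fst (snd z)) \<le> B" "z \<in> K \<Longrightarrow> snd (snd z) \<le> B"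
  using someI_ex[OF B_ex] unfolding B_def by blast+

definition mK where "mK = integral Omega (\<lambda>z. if z \<in> K then 1 else (0::real))"

lemma int_ind: "integral Omega (\<lambda>z. if z \<in> K then c else 0) = c * mK"
proof -
  have "(\<lambda>z. if z \<in> K then c else 0) = (\<lambda>z. c * (if z \<in> K then 1 else (0::real)))" by auto
  then show ?thesis unfolding mK_def by simp
qed

lemma ind_int: "(\<lambda>z. if z \<in> K then c else (0::real)) integrable_on Omega"
  by (rule ind_integrable[OF Kc KO])

lemma mK: "mK \<ge> 0"
  unfolding mK_def by (rule integral_nonneg[OF ind_int]) auto

lemma phi0: "\<phi> 0 \<ge> 0" using phi_nn by auto

lemma A0_bound:
  assumes t: "t \<in> {0..T}"
  shows "\<bar>integral Omega (wt t x)\<bar> \<le> \<phi> 0 * M * mK"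
proof -
  have t0: "t \<ge> 0" using t by simp
  have pw: "\<bar>wt t x z\<bar> \<le> (if z \<in> K then \<phi> 0 * M else 0)" if z: "z \<in> Omega" for z
  proof (cases "z \<in> K")
    case True
    have a: "0 \<le> \<phi> (norm (x - fst z))" "\<phi> (norm (x - fst z)) \<le> \<phi> 0"
      using phi_nn phi_le0 by auto
    have "\<bar>ff t z\<bar> \<le> M" using M(2)[OF t True] .
    then have "\<phi> (norm (x - fst z)) * \<bar>ff t z\<bar> \<le> \<phi> 0 * M"
      using a M(1) by (intro mult_mono) auto
    then show ?thesis using True a by (simp add: wt_def abs_mult)
  next
    case False
    then show ?thesis using offK[OF t z False] by (simp add: wt_def)
  qed
  have "integral Omega (wt t x) \<le> integral Omega (\<lambda>z. if z \<in> K then \<phi> 0 * M else 0)"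
    by (rule integral_le[OF wt_int0[OF t0] ind_int]) (use pw in force)
  moreover have "integral Omega (\<lambda>z. if z \<in> K then - (\<phi> 0 * M) else 0) \<le> integral Omega (wt t x)"
  proof (rule integral_le[OF ind_int wt_int0[OF t0]])
    fix z :: "(real^'n) \<times> (real^'n) \<times> real" assume "z \<in> Omega"
    then show "(if z \<in> K then - (\<phi> 0 * M) else 0) \<le> wt t x z" using pw[of z] by (auto split: if_splits)
  qed
  ultimately show ?thesis unfolding int_ind by (simp add: abs_le_iff)
qed

definition Lam where "Lam = \<phi> 0 * M * mK / 2 + 2 * \<sigma> * B + real CARD('n) * \<sigma> * (1 + p) * B powr p
   + (real CARD('n) + \<kappa>) * (\<phi> 0 * M * mK)"

definition lam where "lam = Lam + 1"

lemma Rd_sum: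
  fixes Rd :: "'n \<Rightarrow> real"
  assumes "\<forall>i. Rd i \<ge> - \<sigma> * (1 + p) * norm v powr p" "norm v \<le> B"
  shows "(\<Sum>i\<in>UNIV. Rd i) \<ge> - (real CARD('n) * \<sigma> * (1 + p) * B powr p)"
proof -
  have "norm v powr p \<le> B powr p" using assms(2) pp by (intro powr_mono2) auto
  then have "- \<sigma> * (1 + p) * B powr p \<le> - \<sigma> * (1 + p) * norm v powr p"
    using sig pp by (simp add: mult_left_mono)
  then have "\<forall>i. Rd i \<ge> - \<sigma> * (1 + p) * B powr p" using assms(1) by (meson order_trans)
  then have "(\<Sum>i\<in>(UNIV::'n set). - \<sigma> * (1 + p) * B powr p) \<le> (\<Sum>i\<in>UNIV. Rd i)"
    by (intro sum_mono) auto
  then show ?thesis by simp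
qed

end


context kinT begin

lemma Lam_nonneg_parts: "real CARD('n) * \<sigma> * (1 + p) * B powr p + (real CARD('n) + \<kappa>) * (\<phi> 0 * M * mK) \<le> Lam"
proof -
  have "0 \<le> \<phi> 0 * M * mK" using phi0 M(1) mK by simp
  moreover have "0 \<le> \<sigma> * B" using sig B(1) by simp
  ultimately show ?thesis unfolding Lam_def by simp
qed

lemma nonneg:
  assumes t0: "t \<in> {0..T}" and z0: "z \<in> Omega"
  shows "ff t z \<ge> 0"
proof (rule ccontr)
  assume neg: "\<not> ff t z \<ge> 0"
  have zK: "z \<in> K" using offK[OF t0 z0] neg by force
  define H where "H = (\<lambda>q. exp (- lam * fst q) * ff (fst q) (snd q))"
  have Hc: "continuous_on ({0..T} \<times> K) H"
  proof -
    have "continuous_on ({0..T} \<times> K) (\<lambda>q. ff (fst q) (snd q))"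
      by (rule continuous_on_subset[OF ffc_cont]) (use KO in auto)
    then show ?thesis unfolding H_def by (intro continuous_intros) auto
  qed
  have ne: "{0..T} \<times> K \<noteq> {}" using t0 zK by blast
  obtain q1 where q1: "q1 \<in> {0..T} \<times> K" "\<forall>q\<in>{0..T} \<times> K. H q1 \<le> H q"
    using continuous_attains_inf[OF compact_Times[OF compact_Icc Kc] ne Hc] by blast
  obtain t1 x1 v1 \<theta>1 where q1e: "q1 = (t1, x1, v1, \<theta>1)" by (cases q1) auto
  have t1: "t1 \<in> {0..T}" and z1K: "(x1, v1, \<theta>1) \<in> K" using q1(1) q1e by auto
  have z1: "(x1, v1, \<theta>1) \<in> Omega" using z1K KO by auto
  have th1: "\<theta>1 > 0" using z1 by (simp add: Omega_iff3)
  define E1 where "E1 = exp (- lam * t1)"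
  have E1: "E1 > 0" unfolding E1_def by simp
  define f1 where "f1 = f t1 x1 v1 \<theta>1"
  have Hq1: "H q1 = E1 * f1" unfolding H_def q1e E1_def f1_def ff_def by simp
  have "H q1 \<le> H (t, z)" using q1(2) t0 zK by blast
  moreover have "H (t, z) < 0" unfolding H_def using neg by (simp add: mult_pos_neg)
  ultimately have Hneg: "H q1 < 0" by simp
  then have f1neg: "f1 < 0" using E1 Hq1 by (simp add: mult_less_0_iff)
  have Hmin: "E1 * f1 \<le> exp (- lam * s) * f s x v th" if "s \<in> {0..T}" "(x, v, th) \<in> Omega" for s x v th
  proof (cases "(x, v, th) \<in> K")
    case True
    then show ?thesis using q1(2) that(1) Hq1 unfolding H_def ff_def by force
  next
    case False
    then have "f s x v th = 0" using offK[OF that] by (simp add: ff_def)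
    then show ?thesis using Hneg Hq1 by simp
  qed
  have t1pos: "t1 > 0"
  proof (rule ccontr)
    assume "\<not> t1 > 0"
    then have "t1 = 0" using t1 by simp
    then have "f1 \<ge> 0" using f0_nonneg[OF z1] unfolding f1_def ff_def by simp
    then show False using f1neg by simp
  qed
  note P = pde_point[OF t1pos z1]
  obtain Rd :: "'n \<Rightarrow> real" where Rd: "\<forall>i. Rd i \<ge> - \<sigma> * (1 + p) * norm v1 powr p"
    and eq: "gd (t1, x1, v1, \<theta>1) (1, 0, 0, 0)
   + (\<Sum>i\<in>UNIV. v1 $ i * gd (t1, x1, v1, \<theta>1) (0, axis i 1, 0, 0))
   + (\<Sum>i\<in>UNIV. gd (t1, x1, v1, \<theta>1) (0, 0, axis i 1, 0) * ((alignF \<phi> f t1 x1 v1) $ i + (relaxR \<sigma> p v1 \<theta>1) $ i))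
   + gd (t1, x1, v1, \<theta>1) (0, 0, 0, 1) * alignTheta \<kappa> \<phi> f t1 x1 \<theta>1
   + f t1 x1 v1 \<theta>1 * ((\<Sum>i\<in>UNIV. Rd i) - (real CARD('n) + \<kappa>) * integral Omega (wt t1 x1)) = 0"
    using P by blast
  have gx: "gd (t1, x1, v1, \<theta>1) (0, axis i 1, 0, 0) = 0" for i
  proof -
    have d: "((\<lambda>h. E1 * f t1 (x1 + h *\<^sub>R axis i 1) v1 \<theta>1) has_real_derivative E1 * gd (t1, x1, v1, \<theta>1) (0, axis i 1, 0, 0)) (at 0)"
      by (rule DERIV_cmult[OF dx[OF t1pos z1]])
    have "\<forall>y. \<bar>0 - y\<bar> < 1 \<longrightarrow> E1 * f t1 (x1 + 0 *\<^sub>R axis i 1) v1 \<theta>1 \<le> E1 * f t1 (x1 + y *\<^sub>R axis i 1) v1 \<theta>1"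
      using Hmin[OF t1, of "x1 + _ *\<^sub>R axis i 1" v1 \<theta>1] th1 unfolding E1_def f1_def by (simp add: Omega_iff3)
    then have "E1 * gd (t1, x1, v1, \<theta>1) (0, axis i 1, 0, 0) = 0"
      by (rule DERIV_local_min[OF d zero_less_one])
    then show ?thesis using E1 by simp
  qed
  have gv: "gd (t1, x1, v1, \<theta>1) (0, 0, axis i 1, 0) = 0" for i
  proof -
    have d: "((\<lambda>h. E1 * f t1 x1 (v1 + h *\<^sub>R axis i 1) \<theta>1) has_real_derivative E1 * gd (t1, x1, v1, \<theta>1) (0, 0, axis i 1, 0)) (at 0)"
      by (rule DERIV_cmult[OF dv[OF t1pos z1]])
    have "\<forall>y. \<bar>0 - y\<bar> < 1 \<longrightarrow> E1 * f t1 x1 (v1 + 0 *\<^sub>R axis i 1) \<theta>1 \<le> E1 * f t1 x1 (v1 + y *\<^sub>R axis i 1) \<theta>1"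
      using Hmin[OF t1, of x1 "v1 + _ *\<^sub>R axis i 1" \<theta>1] th1 unfolding E1_def f1_def by (simp add: Omega_iff3)
    then have "E1 * gd (t1, x1, v1, \<theta>1) (0, 0, axis i 1, 0) = 0"
      by (rule DERIV_local_min[OF d zero_less_one])
    then show ?thesis using E1 by simp
  qed
  have gth: "gd (t1, x1, v1, \<theta>1) (0, 0, 0, 1) = 0"
  proof -
    have d: "((\<lambda>h. E1 * f t1 x1 v1 h) has_real_derivative E1 * gd (t1, x1, v1, \<theta>1) (0, 0, 0, 1)) (at \<theta>1)"
      by (rule DERIV_cmult[OF dth[OF t1pos z1]])
    have "\<forall>y. \<bar>\<theta>1 - y\<bar> < \<theta>1 \<longrightarrow> E1 * f t1 x1 v1 \<theta>1 \<le> E1 * f t1 x1 v1 y"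
    proof (intro allI impI)
      fix y assume "\<bar>\<theta>1 - y\<bar> < \<theta>1"
      then have "y > 0" by simp
      then show "E1 * f t1 x1 v1 \<theta>1 \<le> E1 * f t1 x1 v1 y"
        using Hmin[OF t1, of x1 v1 y] unfolding E1_def f1_def by (simp add: Omega_iff3)
    qed
    then have "E1 * gd (t1, x1, v1, \<theta>1) (0, 0, 0, 1) = 0"
      by (rule DERIV_local_min[OF d th1])
    then show ?thesis using E1 by simp
  qed
  have gt: "gd (t1, x1, v1, \<theta>1) (1, 0, 0, 0) \<le> lam * f1"
  proof -
    have de: "((\<lambda>s. exp (- lam * s)) has_real_derivative exp (- lam * t1) * (- lam)) (at t1)"
      by (auto intro!: derivative_eq_intros)
    have d: "((\<lambda>s. exp (- lam * s) * f s x1 v1 \<theta>1) has_real_derivative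
        exp (- lam * t1) * (- lam) * f t1 x1 v1 \<theta>1 + gd (t1, x1, v1, \<theta>1) (1, 0, 0, 0) * exp (- lam * t1)) (at t1)"
      by (rule DERIV_mult[OF de dt[OF t1pos z1]])
    have "exp (- lam * t1) * (- lam) * f t1 x1 v1 \<theta>1 + gd (t1, x1, v1, \<theta>1) (1, 0, 0, 0) * exp (- lam * t1) \<le> 0"
    proof (rule deriv_left_min[OF d t1pos])
      fix h :: real assume h: "0 < h" "h < t1"
      then have "t1 - h \<in> {0..T}" using t1 by auto
      then show "exp (- lam * t1) * f t1 x1 v1 \<theta>1 \<le> exp (- lam * (t1 - h)) * f (t1 - h) x1 v1 \<theta>1"
        using Hmin[OF _ z1] unfolding E1_def f1_def by blast
    qed
    then have "E1 * (gd (t1, x1, v1, \<theta>1) (1, 0, 0, 0) - lam * f1) \<le> 0"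
      unfolding E1_def f1_def by (simp add: algebra_simps)
    then show ?thesis using E1 by (simp add: mult_le_0_iff)
  qed
  define X where "X = (\<Sum>i\<in>UNIV. Rd i) - (real CARD('n) + \<kappa>) * integral Omega (wt t1 x1)"
  have eq2: "gd (t1, x1, v1, \<theta>1) (1, 0, 0, 0) + f1 * X = 0"
    using eq unfolding gx gv gth X_def f1_def by simp
  have "(- f1) * (X + lam) \<le> 0" using gt eq2 by (simp add: algebra_simps)
  then have "0 \<le> f1 * (X + lam)" by (simp add: algebra_simps)
  then have Xl: "X + lam \<le> 0" using f1neg by (auto simp: zero_le_mult_iff)
  have "(\<Sum>i\<in>UNIV. Rd i) \<ge> - (real CARD('n) * \<sigma> * (1 + p) * B powr p)"
    by (rule Rd_sum[OF Rd B(2)[OF z1K, simplified]])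
  moreover have "(real CARD('n) + \<kappa>) * integral Omega (wt t1 x1) \<le> (real CARD('n) + \<kappa>) * (\<phi> 0 * M * mK)"
    using A0_bound[OF t1, of x1] kap by (intro mult_left_mono) auto
  ultimately have "X \<ge> - (real CARD('n) * \<sigma> * (1 + p) * B powr p + (real CARD('n) + \<kappa>) * (\<phi> 0 * M * mK))"
    unfolding X_def by simp
  then have "X \<ge> - Lam" using Lam_nonneg_parts by simp
  then show False using Xl unfolding lam_def by simp
qed

end


context kin begin

lemma l_basis: "\<l> y = (\<Sum>i\<in>UNIV. y $ i * \<l> (axis i 1))"
proof -
  have "\<l> y = \<l> (\<Sum>i\<in>UNIV. y $ i *\<^sub>R axis i 1)"
    using basis_expansion[of y] by (simp add: scalar_mult_eq_scaleR)
  also have "\<dots> = (\<Sum>i\<in>UNIV. y $ i * \<l> (axis i 1))"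
    by (simp add: linear_sum[OF lin] linear_scale[OF lin])
  finally show ?thesis .
qed

lemma l_line: "\<l> (v + h *\<^sub>R e) = \<l> v + h * \<l> e"
  by (simp add: linear_add[OF lin] linear_scale[OF lin])

end

context kinT begin

definition psi where "psi v = (min (\<l> v) 0)^2"

lemma psi_cont: "continuous_on S (\<lambda>z. psi (fst (snd z)))"
  unfolding psi_def
  by (intro continuous_intros continuous_on_compose2[OF l_cont]) auto

lemma psi_deriv:
  assumes L: "\<l> v < 0"
  shows "((\<lambda>h. psi (v + h *\<^sub>R e)) has_real_derivative 2 * \<l> v * \<l> e) (at 0)"
proof -
  have d: "((\<lambda>h. (\<l> v + h * \<l> e)^2) has_real_derivative 2 * \<l> v * \<l> e) (at 0)"
    by (auto intro!: derivative_eq_intros)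
  show ?thesis
  proof (rule has_field_derivative_transform_within_open[OF d, of "{h. \<l> v + h * \<l> e < 0}"])
    show "open {h. \<l> v + h * \<l> e < 0}" by (auto intro!: open_Collect_less continuous_intros)
    show "0 \<in> {h. \<l> v + h * \<l> e < 0}" using L by simp
    fix h assume "h \<in> {h. \<l> v + h * \<l> e < 0}"
    then show "(\<l> v + h * \<l> e)^2 = psi (v + h *\<^sub>R e)" unfolding psi_def l_line by simp
  qed
qed

lemma vanish:
  assumes t0: "t \<in> {0..T}" and z0: "z \<in> Omega" and lz: "\<l> (fst (snd z)) < 0"
  shows "ff t z = 0"
proof (rule ccontr)
  assume nz: "ff t z \<noteq> 0"
  then have pos: "ff t z > 0" using nonneg[OF t0 z0] by simp
  have zK: "z \<in> K" using offK[OF t0 z0] nz by force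
  define H where "H = (\<lambda>q. exp (- lam * fst q) * ff (fst q) (snd q) * psi (fst (snd (snd q))))"
  have Hc: "continuous_on ({0..T} \<times> K) H"
  proof -
    have "continuous_on ({0..T} \<times> K) (\<lambda>q. ff (fst q) (snd q))"
      by (rule continuous_on_subset[OF ffc_cont]) (use KO in auto)
    moreover have "continuous_on ({0..T} \<times> K) (\<lambda>q. psi (fst (snd (snd q))))"
      unfolding psi_def
      by (intro continuous_intros continuous_on_compose2[OF l_cont]) auto
    ultimately show ?thesis unfolding H_def by (intro continuous_intros) auto
  qed
  have ne: "{0..T} \<times> K \<noteq> {}" using t0 zK by blast
  obtain q1 where q1: "q1 \<in> {0..T} \<times> K" "\<forall>q\<in>{0..T} \<times> K. H q \<le> H q1"
    using continuous_attains_sup[OF compact_Times[OF compact_Icc Kc] ne Hc] by blast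
  obtain t1 x1 v1 \<theta>1 where q1e: "q1 = (t1, x1, v1, \<theta>1)" by (cases q1) auto
  have t1: "t1 \<in> {0..T}" and z1K: "(x1, v1, \<theta>1) \<in> K" using q1(1) q1e by auto
  have z1: "(x1, v1, \<theta>1) \<in> Omega" using z1K KO by auto
  have th1: "\<theta>1 > 0" using z1 by (simp add: Omega_iff3)
  define E1 where "E1 = exp (- lam * t1)"
  have E1: "E1 > 0" unfolding E1_def by simp
  define f1 where "f1 = f t1 x1 v1 \<theta>1"
  define L where "L = \<l> v1"
  have Hq1: "H q1 = E1 * f1 * psi v1" unfolding H_def q1e E1_def f1_def ff_def by simp
  have "H (t, z) \<le> H q1" using q1(2) t0 zK by blast
  moreover have "H (t, z) > 0" unfolding H_def psi_def using pos lz by simp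
  ultimately have Hpos: "H q1 > 0" by simp
  have f1nn: "f1 \<ge> 0" using nonneg[OF t1 z1] unfolding f1_def ff_def by simp
  have psinn: "psi v1 \<ge> 0" unfolding psi_def by simp
  have f1pos: "f1 > 0" and psipos: "psi v1 > 0"
    using Hpos Hq1 E1 f1nn psinn by (auto simp: zero_less_mult_iff)
  have Lneg: "L < 0" using psipos unfolding psi_def L_def by (cases "\<l> v1 < 0") auto
  have psiv1: "psi v1 = L^2" using Lneg unfolding psi_def L_def by simp
  have Hmax: "exp (- lam * s) * f s x v th * psi v \<le> E1 * f1 * psi v1" if "s \<in> {0..T}" "(x, v, th) \<in> Omega" for s x v th
  proof (cases "(x, v, th) \<in> K")
    case True
    then show ?thesis using q1(2) that(1) Hq1 unfolding H_def ff_def by force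
  next
    case False
    then have "f s x v th = 0" using offK[OF that] by (simp add: ff_def)
    then show ?thesis using Hpos Hq1 by simp
  qed
  have t1pos: "t1 > 0"
  proof (rule ccontr)
    assume "\<not> t1 > 0"
    then have t10: "t1 = 0" using t1 by simp
    have "f1 = 0" using f0_zero[OF z1] Lneg unfolding f1_def ff_def L_def t10 by simp
    then show False using f1pos by simp
  qed
  note P = pde_point[OF t1pos z1]
  obtain Rd :: "'n \<Rightarrow> real" where Rd: "\<forall>i. Rd i \<ge> - \<sigma> * (1 + p) * norm v1 powr p"
    and eq: "gd (t1, x1, v1, \<theta>1) (1, 0, 0, 0)
   + (\<Sum>i\<in>UNIV. v1 $ i * gd (t1, x1, v1, \<theta>1) (0, axis i 1, 0, 0))
   + (\<Sum>i\<in>UNIV. gd (t1, x1, v1, \<theta>1) (0, 0, axis i 1, 0) * ((alignF \<phi> f t1 x1 v1) $ i + (relaxR \<sigma> p v1 \<theta>1) $ i))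
   + gd (t1, x1, v1, \<theta>1) (0, 0, 0, 1) * alignTheta \<kappa> \<phi> f t1 x1 \<theta>1
   + f t1 x1 v1 \<theta>1 * ((\<Sum>i\<in>UNIV. Rd i) - (real CARD('n) + \<kappa>) * integral Omega (wt t1 x1)) = 0"
    using P by blast
  define C1 where "C1 = E1 * psi v1"
  have C1: "C1 > 0" unfolding C1_def using E1 psipos by simp
  have gx: "gd (t1, x1, v1, \<theta>1) (0, axis i 1, 0, 0) = 0" for i
  proof -
    have d: "((\<lambda>h. C1 * f t1 (x1 + h *\<^sub>R axis i 1) v1 \<theta>1) has_real_derivative C1 * gd (t1, x1, v1, \<theta>1) (0, axis i 1, 0, 0)) (at 0)"
      by (rule DERIV_cmult[OF dx[OF t1pos z1]])
    have "\<forall>y. \<bar>0 - y\<bar> < 1 \<longrightarrow> C1 * f t1 (x1 + y *\<^sub>R axis i 1) v1 \<theta>1 \<le> C1 * f t1 (x1 + 0 *\<^sub>R axis i 1) v1 \<theta>1"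
      using Hmax[OF t1, of "x1 + _ *\<^sub>R axis i 1" v1 \<theta>1] th1 unfolding C1_def E1_def f1_def
      by (simp add: Omega_iff3 algebra_simps)
    then have "C1 * gd (t1, x1, v1, \<theta>1) (0, axis i 1, 0, 0) = 0"
      by (rule DERIV_local_max[OF d zero_less_one])
    then show ?thesis using C1 by simp
  qed
  have gth: "gd (t1, x1, v1, \<theta>1) (0, 0, 0, 1) = 0"
  proof -
    have d: "((\<lambda>h. C1 * f t1 x1 v1 h) has_real_derivative C1 * gd (t1, x1, v1, \<theta>1) (0, 0, 0, 1)) (at \<theta>1)"
      by (rule DERIV_cmult[OF dth[OF t1pos z1]])
    have "\<forall>y. \<bar>\<theta>1 - y\<bar> < \<theta>1 \<longrightarrow> C1 * f t1 x1 v1 y \<le> C1 * f t1 x1 v1 \<theta>1"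
    proof (intro allI impI)
      fix y assume "\<bar>\<theta>1 - y\<bar> < \<theta>1"
      then have "y > 0" by simp
      then show "C1 * f t1 x1 v1 y \<le> C1 * f t1 x1 v1 \<theta>1"
        using Hmax[OF t1, of x1 v1 y] unfolding C1_def E1_def f1_def by (simp add: Omega_iff3 algebra_simps)
    qed
    then have "C1 * gd (t1, x1, v1, \<theta>1) (0, 0, 0, 1) = 0"
      by (rule DERIV_local_max[OF d th1])
    then show ?thesis using C1 by simp
  qed
  have gv: "gd (t1, x1, v1, \<theta>1) (0, 0, axis i 1, 0) = - 2 * f1 * \<l> (axis i 1) / L" for i
  proof -
    have d0: "((\<lambda>h. f t1 x1 (v1 + h *\<^sub>R axis i 1) \<theta>1 * psi (v1 + h *\<^sub>R axis i 1)) has_real_derivative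
        gd (t1, x1, v1, \<theta>1) (0, 0, axis i 1, 0) * psi (v1 + 0 *\<^sub>R axis i 1) + 2 * \<l> v1 * \<l> (axis i 1) * f t1 x1 (v1 + 0 *\<^sub>R axis i 1) \<theta>1) (at 0)"
      by (rule DERIV_mult[OF dv[OF t1pos z1] psi_deriv]) (use Lneg L_def in simp)
    have d: "((\<lambda>h. E1 * (f t1 x1 (v1 + h *\<^sub>R axis i 1) \<theta>1 * psi (v1 + h *\<^sub>R axis i 1))) has_real_derivative
        E1 * (gd (t1, x1, v1, \<theta>1) (0, 0, axis i 1, 0) * L^2 + 2 * L * \<l> (axis i 1) * f1)) (at 0)"
      using DERIV_cmult[OF d0, of E1] psiv1 unfolding L_def f1_def by simp
    have "\<forall>y. \<bar>0 - y\<bar> < 1 \<longrightarrow> E1 * (f t1 x1 (v1 + y *\<^sub>R axis i 1) \<theta>1 * psi (v1 + y *\<^sub>R axis i 1))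
           \<le> E1 * (f t1 x1 (v1 + 0 *\<^sub>R axis i 1) \<theta>1 * psi (v1 + 0 *\<^sub>R axis i 1))"
      using Hmax[OF t1, of x1 "v1 + _ *\<^sub>R axis i 1" \<theta>1] th1 unfolding E1_def f1_def
      by (simp add: Omega_iff3 algebra_simps)
    then have "E1 * (gd (t1, x1, v1, \<theta>1) (0, 0, axis i 1, 0) * L^2 + 2 * L * \<l> (axis i 1) * f1) = 0"
      by (rule DERIV_local_max[OF d zero_less_one])
    then have "gd (t1, x1, v1, \<theta>1) (0, 0, axis i 1, 0) * L^2 + 2 * L * \<l> (axis i 1) * f1 = 0"
      using E1 by simp
    then have "L * (gd (t1, x1, v1, \<theta>1) (0, 0, axis i 1, 0) * L + 2 * \<l> (axis i 1) * f1) = 0"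
      by (simp add: power2_eq_square algebra_simps)
    then have "gd (t1, x1, v1, \<theta>1) (0, 0, axis i 1, 0) * L + 2 * \<l> (axis i 1) * f1 = 0"
      using Lneg by simp
    then show ?thesis using Lneg by (simp add: field_simps)
  qed
  have gt: "gd (t1, x1, v1, \<theta>1) (1, 0, 0, 0) \<ge> lam * f1"
  proof -
    have de: "((\<lambda>s. exp (- lam * s)) has_real_derivative exp (- lam * t1) * (- lam)) (at t1)"
      by (auto intro!: derivative_eq_intros)
    have d: "((\<lambda>s. exp (- lam * s) * f s x1 v1 \<theta>1) has_real_derivative
        exp (- lam * t1) * (- lam) * f t1 x1 v1 \<theta>1 + gd (t1, x1, v1, \<theta>1) (1, 0, 0, 0) * exp (- lam * t1)) (at t1)"
      by (rule DERIV_mult[OF de dt[OF t1pos z1]])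
    have d2: "((\<lambda>s. exp (- lam * s) * f s x1 v1 \<theta>1 * psi v1) has_real_derivative
        (exp (- lam * t1) * (- lam) * f t1 x1 v1 \<theta>1 + gd (t1, x1, v1, \<theta>1) (1, 0, 0, 0) * exp (- lam * t1)) * psi v1) (at t1)"
      by (rule DERIV_cmult_right[OF d])
    have "(exp (- lam * t1) * (- lam) * f t1 x1 v1 \<theta>1 + gd (t1, x1, v1, \<theta>1) (1, 0, 0, 0) * exp (- lam * t1)) * psi v1 \<ge> 0"
    proof (rule deriv_left_max[OF d2 t1pos])
      fix h :: real assume h: "0 < h" "h < t1"
      then have "t1 - h \<in> {0..T}" using t1 by auto
      then show "exp (- lam * (t1 - h)) * f (t1 - h) x1 v1 \<theta>1 * psi v1 \<le> exp (- lam * t1) * f t1 x1 v1 \<theta>1 * psi v1"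
        using Hmax[OF _ z1] unfolding E1_def f1_def by blast
    qed
    then have "C1 * (gd (t1, x1, v1, \<theta>1) (1, 0, 0, 0) - lam * f1) \<ge> 0"
      unfolding C1_def E1_def f1_def by (simp add: algebra_simps)
    then show ?thesis using C1 by (simp add: zero_le_mult_iff)
  qed
  have t1g: "t1 \<ge> 0" using t1pos by simp
  define X where "X = (\<Sum>i\<in>UNIV. Rd i) - (real CARD('n) + \<kappa>) * integral Omega (wt t1 x1)"
  define Y where "Y = alignF \<phi> f t1 x1 v1 + relaxR \<sigma> p v1 \<theta>1"
  define J where "J = \<l> (alignF \<phi> f t1 x1 v1)"
  have sumv: "(\<Sum>i\<in>UNIV. gd (t1, x1, v1, \<theta>1) (0, 0, axis i 1, 0) * ((alignF \<phi> f t1 x1 v1) $ i + (relaxR \<sigma> p v1 \<theta>1) $ i))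
      = (- 2 * f1 / L) * \<l> Y"
  proof -
    have "(\<Sum>i\<in>UNIV. gd (t1, x1, v1, \<theta>1) (0, 0, axis i 1, 0) * ((alignF \<phi> f t1 x1 v1) $ i + (relaxR \<sigma> p v1 \<theta>1) $ i))
       = (\<Sum>i\<in>UNIV. (- 2 * f1 / L) * (Y $ i * \<l> (axis i 1)))"
      unfolding gv Y_def by (intro sum.cong refl) (simp add: algebra_simps)
    also have "\<dots> = (- 2 * f1 / L) * (\<Sum>i\<in>UNIV. Y $ i * \<l> (axis i 1))"
      by (rule sum_distrib_left[symmetric])
    also have "\<dots> = (- 2 * f1 / L) * \<l> Y"
      by (simp only: l_basis[of Y, symmetric])
    finally show ?thesis .
  qed
  have eq2: "gd (t1, x1, v1, \<theta>1) (1, 0, 0, 0) + (- 2 * f1 / L) * \<l> Y + f1 * X = 0"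
    using eq unfolding gx gth sumv X_def f1_def by simp
  have lR: "\<l> (relaxR \<sigma> p v1 \<theta>1) = \<sigma> * (\<theta>1 - norm v1 powr p) * L"
    unfolding relaxR_def L_def by (simp add: linear_scale[OF lin])
  have lY: "\<l> Y = J + \<sigma> * (\<theta>1 - norm v1 powr p) * L"
    unfolding Y_def J_def using lR by (simp add: linear_add[OF lin])
  have Jb: "J \<ge> \<phi> 0 * f1 * L / 4 * mK"
  proof -
    have "integral Omega (\<lambda>z. if z \<in> K then \<phi> 0 * f1 * L / 4 else 0)
        \<le> integral Omega (\<lambda>z. wt t1 x1 z * (\<l> (fst (snd z)) - \<l> v1))"
    proof (rule integral_le[OF ind_int])
      show "(\<lambda>z. wt t1 x1 z * (\<l> (fst (snd z)) - \<l> v1)) integrable_on Omega"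
      proof -
        have "(\<lambda>z. wt t1 x1 z * \<l> (fst (snd z)) - wt t1 x1 z * \<l> v1) integrable_on Omega"
          by (intro integrable_diff wt_int_l[OF t1g] integrable_on_mult_left wt_int0[OF t1g])
        then show ?thesis by (simp add: algebra_simps)
      qed
      fix z :: "(real^'n) \<times> (real^'n) \<times> real" assume zO: "z \<in> Omega"
      obtain y w \<eta> where ze: "z = (y, w, \<eta>)" by (cases z)
      show "(if z \<in> K then \<phi> 0 * f1 * L / 4 else 0) \<le> wt t1 x1 z * (\<l> (fst (snd z)) - \<l> v1)"
      proof (cases "z \<in> K")
        case False
        then show ?thesis using offK[OF t1 zO False] by (simp add: wt_def)
      next
        case True
        have ph: "0 \<le> \<phi> (norm (x1 - y))" "\<phi> (norm (x1 - y)) \<le> \<phi> 0" using phi_nn phi_le0 by auto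
        have fz: "ff t1 z \<ge> 0" by (rule nonneg[OF t1 zO])
        have lhs: "\<phi> 0 * f1 * L / 4 \<le> 0" using phi0 f1pos Lneg
          by (simp add: mult_nonneg_nonneg mult_nonneg_nonpos divide_nonpos_pos)
        show ?thesis
        proof (cases "\<l> w < L")
          case False
          then have "0 \<le> wt t1 x1 z * (\<l> (fst (snd z)) - \<l> v1)"
            using ph fz unfolding wt_def ze L_def by simp
          then show ?thesis using True lhs by simp
        next
          case True2: True
          have "exp (- lam * t1) * f t1 y w \<eta> * psi w \<le> E1 * f1 * psi v1"
            using Hmax[OF t1, of y w \<eta>] zO ze by simp
          then have "E1 * (f t1 y w \<eta> * (\<l> w)^2) \<le> E1 * (f1 * L^2)"
            using True2 Lneg unfolding psi_def E1_def L_def psiv1 by (simp add: algebra_simps)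
          then have hb: "f t1 y w \<eta> * (\<l> w)^2 \<le> f1 * L^2" using E1 by simp
          have "\<phi> 0 * f1 * L / 4 \<le> \<phi> (norm (x1 - y)) * f t1 y w \<eta> * (\<l> w - L)"
            by (rule arith1[OF ph _ f1pos Lneg True2 hb]) (use fz ze in \<open>simp add: ff_def\<close>)
          then show ?thesis using True unfolding wt_def ze ff_def L_def by simp
        qed
      qed
    qed
    then show ?thesis unfolding J_def l_alignF[OF t1g] int_ind by simp
  qed
  define c where "c = 2 * f1 / L"
  have cneg: "c < 0" unfolding c_def using f1pos Lneg by (simp add: divide_pos_neg)
  have cJ: "c * J \<le> c * (\<phi> 0 * f1 * L / 4 * mK)"
    by (rule mult_left_mono_neg[OF Jb]) (use cneg in simp)
  have cJ2: "c * (\<phi> 0 * f1 * L / 4 * mK) = \<phi> 0 * f1 * mK / 2 * f1"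
    unfolding c_def using Lneg by (simp add: field_simps)
  have cR: "c * (\<sigma> * (\<theta>1 - norm v1 powr p) * L) = 2 * \<sigma> * (\<theta>1 - norm v1 powr p) * f1"
    unfolding c_def using Lneg by (simp add: field_simps)
  have thB: "\<theta>1 \<le> B" using B(3)[OF z1K] by simp
  have "norm v1 powr p \<ge> 0" by simp
  then have "\<theta>1 - norm v1 powr p \<le> B" using thB by linarith
  then have "\<sigma> * (\<theta>1 - norm v1 powr p) \<le> \<sigma> * B" using sig by (intro mult_left_mono) auto
  then have cR2: "2 * \<sigma> * (\<theta>1 - norm v1 powr p) * f1 \<le> 2 * \<sigma> * B * f1"
    using f1pos by (intro mult_right_mono) auto
  have f1M: "f1 \<le> M" using M(2)[OF t1 z1K] unfolding f1_def ff_def by simp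
  have "\<phi> 0 * f1 * mK / 2 \<le> \<phi> 0 * M * mK / 2"
    using f1M phi0 mK by (intro divide_right_mono mult_right_mono mult_left_mono) auto
  then have cJ3: "\<phi> 0 * f1 * mK / 2 * f1 \<le> \<phi> 0 * M * mK / 2 * f1"
    using f1pos by (intro mult_right_mono) auto
  have "(\<Sum>i\<in>UNIV. Rd i) \<ge> - (real CARD('n) * \<sigma> * (1 + p) * B powr p)"
    by (rule Rd_sum[OF Rd B(2)[OF z1K, simplified]])
  moreover have "(real CARD('n) + \<kappa>) * integral Omega (wt t1 x1) \<le> (real CARD('n) + \<kappa>) * (\<phi> 0 * M * mK)"
    using A0_bound[OF t1, of x1] kap by (intro mult_left_mono) auto
  ultimately have "X \<ge> - (real CARD('n) * \<sigma> * (1 + p) * B powr p + (real CARD('n) + \<kappa>) * (\<phi> 0 * M * mK))"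
    unfolding X_def by simp
  then have "f1 * (- (real CARD('n) * \<sigma> * (1 + p) * B powr p + (real CARD('n) + \<kappa>) * (\<phi> 0 * M * mK))) \<le> f1 * X"
    using f1pos by (intro mult_left_mono) auto
  then have fX: "- f1 * X \<le> (real CARD('n) * \<sigma> * (1 + p) * B powr p + (real CARD('n) + \<kappa>) * (\<phi> 0 * M * mK)) * f1"
    by (simp add: algebra_simps)
  have "- 2 * f1 / L = - c" unfolding c_def by simp
  then have "gd (t1, x1, v1, \<theta>1) (1, 0, 0, 0) = c * J + c * (\<sigma> * (\<theta>1 - norm v1 powr p) * L) - f1 * X"
    using eq2 unfolding lY by (simp add: algebra_simps)
  then have "lam * f1 \<le> c * J + c * (\<sigma> * (\<theta>1 - norm v1 powr p) * L) - f1 * X" using gt by simp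
  moreover have "c * J + c * (\<sigma> * (\<theta>1 - norm v1 powr p) * L) - f1 * X
      \<le> \<phi> 0 * M * mK / 2 * f1 + 2 * \<sigma> * B * f1 + (real CARD('n) * \<sigma> * (1 + p) * B powr p + (real CARD('n) + \<kappa>) * (\<phi> 0 * M * mK)) * f1"
    using cJ cJ2 cR cR2 cJ3 fX by linarith
  moreover have "\<phi> 0 * M * mK / 2 * f1 + 2 * \<sigma> * B * f1 + (real CARD('n) * \<sigma> * (1 + p) * B powr p + (real CARD('n) + \<kappa>) * (\<phi> 0 * M * mK)) * f1
      = Lam * f1" unfolding Lam_def by (simp add: algebra_simps)
  ultimately have "lam * f1 \<le> Lam * f1" by linarith
  then have "lam \<le> Lam" using f1pos by simp
  then show False unfolding lam_def by simp
qed

end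

theorem mainTheorem3:
  fixes \<phi> :: "real \<Rightarrow> real" and \<sigma> p \<kappa> :: real
    and f0 :: "real^'n \<Rightarrow> real^'n \<Rightarrow> real \<Rightarrow> real"
    and f :: "real \<Rightarrow> real^'n \<Rightarrow> real^'n \<Rightarrow> real \<Rightarrow> real"
    and \<l> :: "real^'n \<Rightarrow> real"
  assumes "smooth_on_nonneg \<phi>"
    and "\<forall>r\<ge>0. \<phi> r \<ge> 0"
    and "\<forall>r s. 0 \<le> r \<and> r \<le> s \<longrightarrow> \<phi> s \<le> \<phi> r"
    and "\<sigma> > 0" and "p > 0" and "\<kappa> > 0"
    and "\<forall>z\<in>Omega. f0 (fst z) (fst (snd z)) (snd (snd z)) \<ge> 0"
    and "compact (supp_Omega (\<lambda>(x, v, \<theta>). f0 x v \<theta>))"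
    and "kinetic_solution \<phi> \<sigma> p \<kappa> f0 f"
    and "linear \<l>"
    and "\<forall>(x0, v0, \<theta>0) \<in> supp_Omega (\<lambda>(x, v, \<theta>). f0 x v \<theta>). \<l> v0 \<ge> 0"
  shows "\<forall>t>0. \<forall>(x, v, \<theta>) \<in> supp_Omega (\<lambda>(x, v, \<theta>). f t x v \<theta>). \<l> v \<ge> 0"
proof -
  have KIN: "kin \<phi> \<sigma> p \<kappa> f0 f \<l>"
    by (rule kin.intro[OF assms(1) assms(2) assms(3) assms(4) assms(5) assms(6) assms(7) assms(9) assms(10) assms(11)])
  interpret k: kin \<phi> \<sigma> p \<kappa> f0 f \<l> by (rule KIN)
  show ?thesis
  proof (intro allI impI ballI)
    fix t :: real and q assume t: "t > 0" and q: "q \<in> supp_Omega (\<lambda>(x, v, \<theta>). f t x v \<theta>)"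
    obtain K where K: "compact K" "K \<subseteq> Omega" "\<forall>s\<in>{0..t}. \<forall>z\<in>Omega. z \<notin> K \<longrightarrow> k.ff s z = 0"
      using k.supp_K[of t] t by auto
    interpret kt: kinT \<phi> \<sigma> p \<kappa> f0 f \<l> t K
      by (rule kinT.intro[OF KIN], unfold_locales) (use t K in auto)
    have sub: "{z \<in> Omega. (\<lambda>(x, v, \<theta>). f t x v \<theta>) z \<noteq> 0} \<subseteq> {z. \<l> (fst (snd z)) \<ge> 0}"
    proof
      fix z assume z: "z \<in> {z \<in> Omega. (\<lambda>(x, v, \<theta>). f t x v \<theta>) z \<noteq> 0}"
      obtain a b c where abc: "z = (a, b, c)" by (cases z)
      have zO: "z \<in> Omega" and nz: "k.ff t z \<noteq> 0" using z abc by (auto simp: k.ff_def)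
      show "z \<in> {z. \<l> (fst (snd z)) \<ge> 0}"
      proof (rule ccontr)
        assume "z \<notin> {z. \<l> (fst (snd z)) \<ge> 0}"
        then have "\<l> (fst (snd z)) < 0" by simp
        then have "k.ff t z = 0" using kt.vanish[OF _ zO] t by simp
        then show False using nz by simp
      qed
    qed
    have cl: "closed {z :: (real^'n) \<times> (real^'n) \<times> real. \<l> (fst (snd z)) \<ge> 0}"
      by (rule closed_Collect_le) (auto intro!: continuous_intros continuous_on_compose2[OF k.l_cont])
    have "q \<in> closure {z \<in> Omega. (\<lambda>(x, v, \<theta>). f t x v \<theta>) z \<noteq> 0}" using q unfolding supp_Omega_def by blast
    then have "q \<in> {z. \<l> (fst (snd z)) \<ge> 0}" using closure_minimal[OF sub cl] by blast
    then show "case q of (x, v, \<theta>) \<Rightarrow> \<l> v \<ge> 0" by (cases q) auto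
  qed
qed

end
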